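(* Under the standing setup, let $g,\tilde g,h,\tilde h$ satisfy $1\ge g\ge\tilde g\ge0$ and $1\ge h\ge\tilde h\ge0$. If $q(g,h)\ge0$ and $m(\tilde g,\tilde h)\ge0$, then $f(g,h)\ge f(\tilde g,\tilde h)$.
   Context: Standing setup. Fix $n\in\mathbb N$ and $W=[w_{ij}]\in\mathbb R^{n\times n}$ with $w_{ij}\ge0$, $w_{ii}=0$. Let $\|W\|_\infty=\max_i\sum_j|w_{ij}|$, $\|W\|_1=\max_j\sum_i|w_{ij}|$, let $\lambda$ be the spectral radius of $W$, and assume there is $c\in\mathbb R^n$ with all entries positive and $W^\top c=\lambda c$. Fix $\beta\ge\gamma\ge0$ with $1-\max\{\|W\|_\infty,\|W\|_1\}>\max\{2\beta,4\gamma\}$. Fix $s\in[0,1]^n$; set $\widehat c_i=c_i/\sum_jc_j$, $\widehat s=\sum_i\widehat c_is_i$, $\chi=\sum_i\widehat c_is_i\sum_jw_{ij}$. For $g,h\in[0,1]$ define $$f(g,h)=\frac{(1-2\beta+(h-g)\gamma)\widehat s-\chi+(h+g)\beta+(g^2-h^2)\gamma}{1-\lambda+(g-h)\gamma}\,c^\top\mathbf 1,$$ $$q(g,h)=(\beta+\gamma\widehat s-2\gamma h)(1-\lambda+\gamma g)+\gamma\big[(1-2\beta-g\gamma)\widehat s-\chi+g\beta+g^2\gamma\big]+\gamma^2h^2,$$ $$m(g,h)=(\beta-\gamma\widehat s+2\gamma g)(1-\lambda-h\gamma)+g^2\gamma^2-\gamma\big[(1-2\beta+h\gamma)\widehat s+h\beta-h^2\gamma-\chi\big].$$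 *)

theory Defs
  imports Complex_Main "Jordan_Normal_Form.Spectral_Radius"
begin

definition spec_rad :: "real mat \<Rightarrow> real" where
  "spec_rad W = spectral_radius (map_mat complex_of_real W)"

definition norm_inf_mat :: "nat \<Rightarrow> real mat \<Rightarrow> real" where
  "norm_inf_mat n W = Max {(\<Sum>j<n. \<bar>W $$ (i,j)\<bar>) | i. i < n}"

definition norm_one_mat :: "nat \<Rightarrow> real mat \<Rightarrow> real" where
  "norm_one_mat n W = Max {(\<Sum>i<n. \<bar>W $$ (i,j)\<bar>) | j. j < n}"

definition c_hat :: "nat \<Rightarrow> real vec \<Rightarrow> nat \<Rightarrow> real" where
  "c_hat n c i = c $ i / (\<Sum>j<n. c $ j)"

definition s_hat :: "nat \<Rightarrow> real vec \<Rightarrow> real vec \<Rightarrow> real" where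
  "s_hat n c s = (\<Sum>i<n. c_hat n c i * s $ i)"

definition chi :: "nat \<Rightarrow> real mat \<Rightarrow> real vec \<Rightarrow> real vec \<Rightarrow> real" where
  "chi n W c s = (\<Sum>i<n. c_hat n c i * s $ i * (\<Sum>j<n. W $$ (i,j)))"

definition c_tot :: "nat \<Rightarrow> real vec \<Rightarrow> real" where
  "c_tot n c = (\<Sum>i<n. c $ i)"

definition f_fun :: "nat \<Rightarrow> real mat \<Rightarrow> real vec \<Rightarrow> real vec \<Rightarrow> real \<Rightarrow> real \<Rightarrow> real \<Rightarrow> real \<Rightarrow> real" where
  "f_fun n W c s \<beta> \<gamma> g h =
     (let lam = spec_rad W; sh = s_hat n c s; \<chi> = chi n W c s in
      ((1 - 2*\<beta> + (h - g)*\<gamma>) * sh - \<chi> + (h + g)*\<beta> + (g^2 - h^2)*\<gamma>)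
        / (1 - lam + (g - h)*\<gamma>) * c_tot n c)"

definition q_fun :: "nat \<Rightarrow> real mat \<Rightarrow> real vec \<Rightarrow> real vec \<Rightarrow> real \<Rightarrow> real \<Rightarrow> real \<Rightarrow> real \<Rightarrow> real" where
  "q_fun n W c s \<beta> \<gamma> g h =
     (let lam = spec_rad W; sh = s_hat n c s; \<chi> = chi n W c s in
      (\<beta> + \<gamma>*sh - 2*\<gamma>*h) * (1 - lam + \<gamma>*g)
      + \<gamma> * ((1 - 2*\<beta> - g*\<gamma>)*sh - \<chi> + g*\<beta> + g^2*\<gamma>) + \<gamma>^2 * h^2)"

definition m_fun :: "nat \<Rightarrow> real mat \<Rightarrow> real vec \<Rightarrow> real vec \<Rightarrow> real \<Rightarrow> real \<Rightarrow> real \<Rightarrow> real \<Rightarrow> real" where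
  "m_fun n W c s \<beta> \<gamma> g h =
     (let lam = spec_rad W; sh = s_hat n c s; \<chi> = chi n W c s in
      (\<beta> - \<gamma>*sh + 2*\<gamma>*g) * (1 - lam - h*\<gamma>) + g^2*\<gamma>^2
      - \<gamma> * ((1 - 2*\<beta> + h*\<gamma>)*sh + h*\<beta> - h^2*\<gamma> - \<chi>))"

end

theory Submission
  imports Defs
begin

lemma key:
  fixes b gm s chi lam g h g' h' C :: real
  defines "N \<equiv> \<lambda>g h. (1 - 2*b + (h - g)*gm) * s - chi + (h + g)*b + (g^2 - h^2)*gm"
    and "D \<equiv> \<lambda>g h. 1 - lam + (g - h)*gm"
  assumes lam: "lam + gm < 1" and gm: "gm \<ge> 0" and C: "C \<ge> 0"
    and g_ord: "1 \<ge> g" "g \<ge> g'" "g' \<ge> 0"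
    and h_ord: "1 \<ge> h" "h \<ge> h'" "h' \<ge> 0"
    and q: "(b + gm*s - 2*gm*h) * (1 - lam + gm*g)
      + gm * ((1 - 2*b - g*gm)*s - chi + g*b + g^2*gm) + gm^2 * h^2 \<ge> 0"
    and m: "(b - gm*s + 2*gm*g') * (1 - lam - h'*gm) + g'^2*gm^2
      - gm * ((1 - 2*b + h'*gm)*s + h'*b - h'^2*gm - chi) \<ge> 0"
  shows "N g' h' / D g' h' * C \<le> N g h / D g h * C"
proof -
  have Dpos: "D x y > 0" if "0 \<le> x" "x \<le> 1" "0 \<le> y" "y \<le> 1" for x y
  proof -
    have "(x - y) * gm \<ge> -1 * gm" using that gm by (intro mult_right_mono) auto
    thus ?thesis using lam unfolding D_def by linarith
  qed
  have D1: "D g h > 0" and D2: "D g h' > 0" and D3: "D g' h' > 0"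
    using Dpos g_ord h_ord by auto
  have id1: "N g h * D g h' - N g h' * D g h = (h - h') * ((b + gm*s - 2*gm*h) * (1 - lam + gm*g)
      + gm * ((1 - 2*b - g*gm)*s - chi + g*b + g^2*gm) + gm^2 * h^2 + gm*(h-h')*D g h)"
    unfolding N_def D_def by (simp add: algebra_simps power2_eq_square)
  have id2: "N g h' * D g' h' - N g' h' * D g h' = (g - g') * ((b - gm*s + 2*gm*g') * (1 - lam - h'*gm) + g'^2*gm^2
      - gm * ((1 - 2*b + h'*gm)*s + h'*b - h'^2*gm - chi) + gm*(g-g')*D g' h')"
    unfolding N_def D_def by (simp add: algebra_simps power2_eq_square)
  have "N g h * D g h' - N g h' * D g h \<ge> 0" unfolding id1
    apply (rule mult_nonneg_nonneg) using h_ord apply simp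
    apply (rule add_nonneg_nonneg[OF q]) using gm D1 h_ord by simp
  hence s1: "N g h' / D g h' \<le> N g h / D g h" using D1 D2 by (simp add: divide_simps)
  have "N g h' * D g' h' - N g' h' * D g h' \<ge> 0" unfolding id2
    apply (rule mult_nonneg_nonneg) using g_ord apply simp
    apply (rule add_nonneg_nonneg[OF m]) using gm D3 g_ord by simp
  hence s2: "N g' h' / D g' h' \<le> N g h' / D g h'" using D3 D2 by (simp add: divide_simps)
  show ?thesis using s1 s2 C by (intro mult_right_mono) auto
qed
theorem lemma4:
  fixes n :: nat and W :: "real mat" and c s :: "real vec"
    and \<beta> \<gamma> g g' h h' :: real
  assumes W: "W \<in> carrier_mat n n"
    and W_nonneg: "\<forall>i<n. \<forall>j<n. W $$ (i,j) \<ge> 0"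
    and W_diag: "\<forall>i<n. W $$ (i,i) = 0"
    and c: "c \<in> carrier_vec n"
    and c_pos: "\<forall>i<n. c $ i > 0"
    and c_eig: "transpose_mat W *\<^sub>v c = spec_rad W \<cdot>\<^sub>v c"
    and \<beta>\<gamma>: "\<beta> \<ge> \<gamma>" "\<gamma> \<ge> 0"
    and norm_bound: "1 - max (norm_inf_mat n W) (norm_one_mat n W) > max (2*\<beta>) (4*\<gamma>)"
    and s: "s \<in> carrier_vec n"
    and s_range: "\<forall>i<n. 0 \<le> s $ i \<and> s $ i \<le> 1"
    and g_ord: "1 \<ge> g" "g \<ge> g'" "g' \<ge> 0"
    and h_ord: "1 \<ge> h" "h \<ge> h'" "h' \<ge> 0"
    and q_nonneg: "q_fun n W c s \<beta> \<gamma> g h \<ge> 0"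
    and m_nonneg: "m_fun n W c s \<beta> \<gamma> g' h' \<ge> 0"
  shows "f_fun n W c s \<beta> \<gamma> g h \<ge> f_fun n W c s \<beta> \<gamma> g' h'"
proof (cases "n = 0")
  case True
  thus ?thesis unfolding f_fun_def c_tot_def by simp
next
  case False
  let ?lam = "spec_rad W"
  let ?C = "\<Sum>i<n. c $ i"
  have Cpos: "?C > 0" using False c_pos by (intro sum_pos) auto
  have eq: "(\<Sum>i<n. W $$ (i,j) * c $ i) = ?lam * c $ j" if j: "j < n" for j
  proof -
    have "(transpose_mat W *\<^sub>v c) $ j = ?lam * c $ j" using c_eig j c by simp
    moreover have "(transpose_mat W *\<^sub>v c) $ j = (\<Sum>i<n. W $$ (i,j) * c $ i)"
      using j W c by (simp add: scalar_prod_def atLeast0LessThan mult.commute)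
    ultimately show ?thesis by simp
  qed
  have fin: "finite {(\<Sum>j<n. \<bar>W $$ (i,j)\<bar>) | i. i < n}" by simp
  have rb: "(\<Sum>j<n. W $$ (i,j)) \<le> norm_inf_mat n W" if i: "i < n" for i
  proof -
    have "(\<Sum>j<n. W $$ (i,j)) = (\<Sum>j<n. \<bar>W $$ (i,j)\<bar>)"
      using W_nonneg i by (intro sum.cong) auto
    also have "\<dots> \<le> norm_inf_mat n W" unfolding norm_inf_mat_def
      using fin i by (intro Max_ge) auto
    finally show ?thesis .
  qed
  have "?lam * ?C = (\<Sum>j<n. ?lam * c $ j)" by (simp add: sum_distrib_left)
  also have "\<dots> = (\<Sum>j<n. \<Sum>i<n. W $$ (i,j) * c $ i)" using eq by simp
  also have "\<dots> = (\<Sum>i<n. c $ i * (\<Sum>j<n. W $$ (i,j)))"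
    by (subst sum.swap) (simp add: sum_distrib_left mult.commute)
  also have "\<dots> \<le> (\<Sum>i<n. c $ i * norm_inf_mat n W)"
    using rb c_pos by (intro sum_mono mult_left_mono) (auto simp: less_imp_le)
  also have "\<dots> = norm_inf_mat n W * ?C" by (simp add: sum_distrib_left mult.commute)
  finally have "?lam \<le> norm_inf_mat n W" using Cpos by simp
  hence lam: "?lam + \<gamma> < 1" using norm_bound \<beta>\<gamma> by linarith
  show ?thesis unfolding f_fun_def Let_def c_tot_def
    apply (rule key[OF lam \<beta>\<gamma>(2) _ g_ord h_ord])
    using Cpos apply simp
    using q_nonneg apply (simp add: q_fun_def Let_def)
    using m_nonneg by (simp add: m_fun_def Let_def)
qed

end
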